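(* Let $T\in M_m(\mathbb F_2)$ have primitive characteristic polynomial $f_T=\sum_{i=0}^m c_i\lambda^i$, and let $S=\langle a_0,\dots,a_{n-1}\rangle\in\mathbb F_2^n$ with $a_0\ne0$; set $f_S=a_0+a_1\lambda+\dots+a_{n-1}\lambda^{n-1}$ and $Q=\sum_{i=0}^m c_i\lambda^{ni}f_S^{m-i}$. Suppose $Q$ is irreducible over $\mathbb F_2$, let $K$ be its splitting field, $\mu\in K$ a root of $Q$, and $L$ the splitting field of $f_T$. Then for every prime $p$ dividing $|L^*|$ (and $|K^*|$), $\mu^{|K^*|/p}\ne1$. Consequently $Q$ is primitive if and only if $\mu^{|K^*|/p}\neq 1$ for every prime $p$ dividing $|K^*|$ but not $|L^*|$.
   Context: A polynomial over $\mathbb F_2$ is primitive if it is irreducible and its roots generate the multiplicative group of its splitting field. The polynomial $Q$ is the characteristic polynomial of the linear map $(v_0,\dots,v_{n-1})\mapsto(v_1,\dots,v_{n-1},T(a_0v_0+\dots+a_{n-1}v_{n-1}))$ on $(\mathbb F_2^m)^n$. *)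

theory Defs
  imports "HOL-Library.Z2" "HOL-Computational_Algebra.Polynomial" "HOL-Computational_Algebra.Factorial_Ring"
    "Jordan_Normal_Form.Char_Poly"
begin

text \<open>The canonical map from F_2 (type bit) into a field; a ring homomorphism when the
  field has characteristic 2.\<close>
definition F2_emb :: "bit \<Rightarrow> 'k::field" where
  "F2_emb b = (if b = 0 then 0 else 1)"

definition is_subfield :: "'k::field set \<Rightarrow> bool" where
  "is_subfield S \<longleftrightarrow> 0 \<in> S \<and> 1 \<in> S \<and> (\<forall>x\<in>S. \<forall>y\<in>S. x + y \<in> S \<and> x * y \<in> S)
     \<and> (\<forall>x\<in>S. - x \<in> S \<and> inverse x \<in> S)"

text \<open>The type 'k (a field of characteristic 2, hence an extension of F_2) is a splitting
  field of f over F_2: f splits into linear factors over 'k, and 'k is generated (over its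
  prime field F_2) by the roots of f.\<close>
definition splitting_field_F2 :: "bit poly \<Rightarrow> 'k::field itself \<Rightarrow> bool" where
  "splitting_field_F2 f K \<longleftrightarrow> CHAR('k) = 2 \<and>
     (\<exists>rs::'k list. map_poly F2_emb f = Polynomial.smult (F2_emb (lead_coeff f)) (\<Prod>r\<leftarrow>rs. [:- r, 1:])) \<and>
     (\<forall>S::'k set. is_subfield S \<and> {r. poly (map_poly F2_emb f) r = 0} \<subseteq> S \<longrightarrow> S = UNIV)"

definition primitive_F2 :: "bit poly \<Rightarrow> 'k::field itself \<Rightarrow> bool" where
  "primitive_F2 f K \<longleftrightarrow> irreducible f \<and>
     (\<forall>\<mu>::'k. poly (map_poly F2_emb f) \<mu> = 0 \<longrightarrow> (\<forall>y::'k. y \<noteq> 0 \<longrightarrow> (\<exists>k::nat. y = \<mu> ^ k)))"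

end

theory Submission
  imports Defs
begin


lemma char2_two:
  assumes "CHAR('k::field) = 2" shows "(2::'k) = 0"
proof -
  have "of_nat CHAR('k) = (0::'k)" by (rule of_nat_CHAR)
  then have "of_nat 2 = (0::'k)" by (simp only: assms)
  then show ?thesis by (simp only: of_nat_numeral)
qed

lemma char2_add_self:
  assumes "CHAR('k::field) = 2" shows "(x::'k) + x = 0"
proof -
  have "x + x = 2 * x" by (rule mult_2[symmetric])
  also have "\<dots> = 0 * x" by (simp only: char2_two[OF assms])
  finally show ?thesis by simp
qed

lemma char2_minus:
  assumes "CHAR('k::field) = 2" shows "- (x::'k) = x"
  using char2_add_self[OF assms, of x] by (simp only: neg_eq_iff_add_eq_0)

lemma char2_one_neq: "CHAR('k::field) = 2 \<Longrightarrow> (1::'k) + 1 = 0"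
  by (rule char2_add_self)

lemma F2_emb_0[simp]: "F2_emb 0 = 0" by (simp add: F2_emb_def)
lemma F2_emb_1[simp]: "F2_emb 1 = 1" by (simp add: F2_emb_def)

lemma bit_cases2: "(b::bit) = 0 \<or> b = 1"
  by (cases b) auto

lemma F2_emb_hom:
  assumes "CHAR('k::field) = 2" shows "comm_ring_hom (F2_emb :: bit \<Rightarrow> 'k)"
proof
  fix x y :: bit
  show "F2_emb (x + y) = (F2_emb x + F2_emb y :: 'k)"
    using char2_add_self[OF assms, of 1] by (cases x; cases y) (auto simp: F2_emb_def)
  show "F2_emb (x * y) = (F2_emb x * F2_emb y :: 'k)"
    by (cases x; cases y) (auto simp: F2_emb_def)
  show "F2_emb 1 = (1::'k)" by (simp add: F2_emb_def)
  show "F2_emb 0 = (0::'k)" by (simp add: F2_emb_def)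
qed

lemma F2_map_hom:
  assumes "CHAR('k::field) = 2" shows "map_poly_comm_ring_hom (F2_emb :: bit \<Rightarrow> 'k)"
  using F2_emb_hom[OF assms] by (simp add: map_poly_comm_ring_hom_def)

abbreviation ev :: "'k::field \<Rightarrow> bit poly \<Rightarrow> 'k" where
  "ev x r \<equiv> poly (map_poly F2_emb r) x"

context fixes dummy :: "'k::field itself" assumes ch: "CHAR('k) = 2"
begin
interpretation h: map_poly_comm_ring_hom "F2_emb :: bit \<Rightarrow> 'k" by (rule F2_map_hom[OF ch])

lemma ev_mult: "ev (x::'k) (p * q) = ev x p * ev x q" unfolding h.hom_mult by (rule poly_mult)
lemma ev_add: "ev (x::'k) (p + q) = ev x p + ev x q" unfolding h.hom_add by (rule poly_add)
lemma ev_diff: "ev (x::'k) (p - q) = ev x p - ev x q" unfolding h.hom_minus by (rule poly_diff)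
lemma ev_power: "ev (x::'k) (p ^ k) = ev x p ^ k" unfolding h.hom_power by (rule poly_power)
lemma ev_sum: "ev (x::'k) (sum f A) = (\<Sum>a\<in>A. ev x (f a))" unfolding h.hom_sum by (rule poly_sum)
lemma ev_one: "ev (x::'k) 1 = 1" by simp
lemma ev_monom: "ev (x::'k) (monom c i) = F2_emb c * x ^ i"
  by (simp add: map_poly_monom poly_monom)
lemma ev_smult: "ev (x::'k) (Polynomial.smult c p) = F2_emb c * ev x p"
  by (simp add: map_poly_smult)
lemma ev_X: "ev (x::'k) [:0,1:] = x" by simp
end

lemma F2_emb_eq0: "(F2_emb b :: 'k::field) = 0 \<longleftrightarrow> b = 0"
  by (cases b) (auto simp: F2_emb_def)

lemma degree_map_F2: "degree (map_poly (F2_emb :: bit \<Rightarrow> 'k::field) p) = degree p"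
  by (rule degree_map_poly) (simp add: F2_emb_eq0)

lemma ev_deg0:
  assumes "degree m = 0" shows "ev x m = F2_emb (coeff m 0)"
proof -
  have "degree (map_poly F2_emb m) = 0" using assms by (simp add: degree_map_F2)
  then show ?thesis by (simp add: poly_altdef coeff_map_poly degree_map_F2 assms)
qed

lemma minpoly:
  assumes ch: "CHAR('k::field) = 2" and irr: "irreducible P" and root: "ev (x::'k) P = 0"
  shows "ev x g = 0 \<longleftrightarrow> P dvd g"
proof
  assume "P dvd g"
  then obtain h where "g = P * h" unfolding dvd_def by blast
  then show "ev x g = 0" using root ev_mult[OF ch] by simp
next
  assume g: "ev x g = 0"
  have P0: "P \<noteq> 0" using irr by auto
  obtain m where mI: "ev x m = 0 \<and> m \<noteq> 0"
    and mmin: "\<And>h. ev x h = 0 \<and> h \<noteq> 0 \<Longrightarrow> degree m \<le> degree h"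
    using ex_has_least_nat[of "\<lambda>h. ev x h = 0 \<and> h \<noteq> 0" P degree] root P0 by blast
  have mdvd: "m dvd h" if h: "ev x h = 0" for h
  proof -
    have "ev x (h mod m) = ev x (h - h div m * m)" by (simp add: mod_div_mult_eq[symmetric] minus_div_mult_eq_mod)
    also have "\<dots> = 0" using h mI by (simp add: ev_diff[OF ch] ev_mult[OF ch])
    finally have r0: "ev x (h mod m) = 0" .
    show "m dvd h"
    proof (rule ccontr)
      assume "\<not> m dvd h"
      then have rn: "h mod m \<noteq> 0" by (simp add: mod_eq_0_iff_dvd)
      then have "degree (h mod m) < degree m" using mI degree_mod_less' by blast
      moreover have "degree m \<le> degree (h mod m)" using mmin r0 rn by blast
      ultimately show False by simp
    qed
  qed
  obtain q where Pq: "P = m * q" using mdvd[OF root] unfolding dvd_def by blast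
  have "is_unit m \<or> is_unit q" by (rule irreducibleD[OF irr Pq])
  then show "P dvd g"
  proof
    assume u: "is_unit m"
    then have "degree m = 0" using mI is_unit_iff_degree by blast
    then have "ev x m = F2_emb (coeff m 0)" by (rule ev_deg0)
    moreover have "coeff m 0 \<noteq> 0" using mI \<open>degree m = 0\<close> leading_coeff_0_iff[of m] by simp
    ultimately have "ev x m \<noteq> 0" by (simp add: F2_emb_eq0)
    then show "P dvd g" using mI by simp
  next
    assume "is_unit q"
    then obtain k where "1 = q * k" unfolding dvd_def by blast
    then have "m = P * k" using Pq by (metis mult.assoc mult_1_right)
    then have "P dvd m" by simp
    then show "P dvd g" using mdvd[OF g] by (rule dvd_trans)
  qed
qed

lemma frob_add:
  assumes ch: "CHAR('k::field) = 2" shows "((x::'k) + y) ^ (2^k) = x ^ (2^k) + y ^ (2^k)"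
proof (induction k)
  case 0 then show ?case by simp
next
  case (Suc k)
  have "(x + y) ^ (2^Suc k) = ((x + y) ^ (2^k))^2" by (simp add: power_mult[symmetric] mult.commute)
  also have "\<dots> = (x ^ (2^k) + y ^ (2^k))^2" using Suc by simp
  also have "\<dots> = (x ^ (2^k))^2 + (y ^ (2^k))^2 + (x^(2^k) * y^(2^k) + x^(2^k) * y^(2^k))"
    by (simp add: power2_eq_square algebra_simps)
  also have "\<dots> = (x ^ (2^k))^2 + (y ^ (2^k))^2" by (simp only: char2_add_self[OF ch] add_0_right)
  also have "\<dots> = x ^ (2^Suc k) + y ^ (2^Suc k)" by (simp add: power_mult[symmetric] mult.commute)
  finally show ?case .
qed

lemma frob_sum:
  assumes ch: "CHAR('k::field) = 2" shows "(sum (f::_ \<Rightarrow> 'k) A) ^ (2^k) = (\<Sum>a\<in>A. f a ^ (2^k))"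
proof (induction A rule: infinite_finite_induct)
  case (infinite A) then show ?case by simp
next
  case empty then show ?case by simp
next
  case (insert a A) then show ?case by (simp add: frob_add[OF ch])
qed

lemma frob_poly:
  assumes ch: "CHAR('k::field) = 2" and c: "\<And>i. (coeff p i) ^ (2^k) = coeff p i"
  shows "poly (p::'k poly) (x ^ (2^k)) = (poly p x) ^ (2^k)"
  using c
proof (induction p rule: pCons_induct)
  case 0 then show ?case by simp
next
  case (pCons a p)
  have a: "a ^ (2^k) = a" using pCons.prems[of 0] by simp
  have cp: "\<And>i. (coeff p i) ^ (2^k) = coeff p i" using pCons.prems[of "Suc i" for i] by simp
  have "poly (pCons a p) x ^ (2^k) = (a + x * poly p x) ^ (2^k)" by simp
  also have "\<dots> = a ^ (2^k) + (x * poly p x) ^ (2^k)" by (rule frob_add[OF ch])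
  also have "\<dots> = a + x ^ (2^k) * poly p (x ^ (2^k))"
    using a pCons.IH[OF cp] by (simp add: power_mult_distrib)
  also have "\<dots> = poly (pCons a p) (x ^ (2^k))" by simp
  finally show ?case by simp
qed

lemma F2_emb_pow: "k > 0 \<Longrightarrow> (F2_emb b :: 'k::field) ^ k = F2_emb b"
  by (cases b) (auto simp: F2_emb_def)

lemma ev_frob:
  assumes ch: "CHAR('k::field) = 2" shows "ev ((x::'k) ^ (2^k)) r = (ev x r) ^ (2^k)"
  by (rule frob_poly[OF ch]) (simp add: coeff_map_poly F2_emb_pow)

lemma frob_subfield:
  assumes ch: "CHAR('k::field) = 2" shows "is_subfield {x::'k. x ^ (2^t) = x}"
  unfolding is_subfield_def
  by (auto simp: power_mult_distrib power_inverse frob_add[OF ch] char2_minus[OF ch])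

lemma frob_finite:
  assumes "t > 0"
  shows "finite {x::'k::field. x ^ (2^t) = x} \<and> card {x::'k. x ^ (2^t) = x} \<le> 2^t"
proof -
  let ?p = "monom (1::'k) (2^t) - monom 1 1"
  have "1 < (2::nat)^t" by (rule one_less_power) (use assms in auto)
  then have N: "Suc 0 \<noteq> (2::nat)^t" "(2::nat)^t \<noteq> 1" "1 \<noteq> (2::nat)^t" by linarith+
  have c1: "coeff ?p (2^t) = 1" using N by (simp add: coeff_monom)
  have p0: "?p \<noteq> 0"
  proof
    assume "?p = 0"
    then have "coeff ?p (2^t) = 0" by (simp only: coeff_0)
    then show False using c1 by simp
  qed
  have eq: "{x::'k. x ^ (2^t) = x} = {x. poly ?p x = 0}" by (auto simp: poly_monom)
  have "degree ?p \<le> 2^t"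
    by (rule order.trans[OF degree_diff_le_max]) (auto simp: degree_monom_eq)
  then show ?thesis unfolding eq using poly_roots_finite[OF p0] card_poly_roots_bound[OF p0] by auto
qed

lemma UNIV_bit_eq: "(UNIV :: bit set) = {0, 1}"
  using bit_cases2 by auto

lemma card_polys_deg:
  assumes "d > 0"
  shows "finite {r::bit poly. degree r < d} \<and> card {r::bit poly. degree r < d} = 2^d"
proof -
  let ?L = "{xs::bit list. set xs \<subseteq> UNIV \<and> length xs = d}"
  have cL: "card ?L = 2^d" using card_lists_length_eq[of "UNIV::bit set" d]
    by (simp add: UNIV_bit_eq flip: numeral_2_eq_2)
  have fL: "finite ?L" using finite_lists_length_eq[of "UNIV::bit set" d] by (simp add: UNIV_bit_eq)
  have inj: "inj_on Poly ?L"
  proof (rule inj_onI)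
    fix xs ys :: "bit list" assume xs: "xs \<in> ?L" and ys: "ys \<in> ?L" and e: "Poly xs = Poly ys"
    show "xs = ys"
    proof (rule nth_equalityI)
      show "length xs = length ys" using xs ys by simp
      fix i assume "i < length xs"
      then show "xs ! i = ys ! i"
        using arg_cong[OF e, of "\<lambda>p. coeff p i"] xs ys by (simp add: coeff_Poly nth_default_def)
    qed
  qed
  have img: "Poly ` ?L = {r::bit poly. degree r < d}"
  proof (intro equalityI subsetI)
    fix r assume "r \<in> Poly ` ?L"
    then obtain xs where xs: "xs \<in> ?L" "r = Poly xs" by auto
    have "degree r \<le> length xs - 1"
    proof (rule degree_le)
      show "\<forall>i>length xs - 1. coeff r i = 0" using xs
        by (auto simp: coeff_Poly nth_default_def)
    qed
    then show "r \<in> {r. degree r < d}" using xs assms by auto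
  next
    fix r :: "bit poly" assume r: "r \<in> {r. degree r < d}"
    let ?xs = "map (coeff r) [0..<d]"
    have "Poly ?xs = r"
    proof (rule poly_eqI)
      fix i show "coeff (Poly ?xs) i = coeff r i"
        using r by (auto simp: coeff_Poly nth_default_def coeff_eq_0)
    qed
    then show "r \<in> Poly ` ?L" by (intro image_eqI[of _ _ ?xs]) auto
  qed
  show ?thesis using card_image[OF inj] cL fL img finite_imageI[OF fL, of Poly] by auto
qed

lemma fermat_subset:
  fixes S :: "'k::field set"
  assumes fin: "finite S" and cl: "\<And>a b. a \<in> S \<Longrightarrow> b \<in> S \<Longrightarrow> a * b \<in> S"
    and x: "x \<in> S" "x \<noteq> 0"
  shows "x ^ card (S - {0}) = 1"
proof -
  let ?A = "S - {0}"
  have finA: "finite ?A" using fin by simp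
  have inj: "inj_on ((*) x) ?A" using x by (auto intro: inj_onI)
  have sub: "(*) x ` ?A \<subseteq> ?A" using x cl by auto
  have eqA: "(*) x ` ?A = ?A"
    by (rule card_subset_eq[OF finA sub]) (simp add: card_image[OF inj])
  have "prod id ?A = prod id ((*) x ` ?A)" using eqA by simp
  also have "\<dots> = prod ((*) x) ?A" by (simp add: prod.reindex[OF inj])
  also have "\<dots> = x ^ card ?A * prod id ?A" by (simp add: prod.distrib)
  finally have e: "prod id ?A = x ^ card ?A * prod id ?A" .
  have "prod id ?A \<noteq> 0" using finA by (simp add: prod_zero_iff)
  then show ?thesis using e by simp
qed



lemma ev_split_char: "splitting_field_F2 P TYPE('k::field) \<Longrightarrow> CHAR('k) = 2"
  by (simp add: splitting_field_F2_def)

lemma ev_X_pow_minus: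
  assumes ch: "CHAR('k::field) = 2"
  shows "ev (y::'k) (monom 1 N - [:0,1:]) = y ^ N - y"
    and "ev (y::'k) (monom 1 N - 1) = y ^ N - 1"
  by (simp_all add: ev_diff[OF ch] ev_monom[OF ch])

lemma card_split:
  assumes irr: "irreducible P" and K: "splitting_field_F2 P TYPE('k::field)"
    and root: "ev (x::'k) P = 0"
  shows "finite (UNIV::'k set) \<and> card (UNIV::'k set) = 2 ^ degree P"
proof -
  have ch: "CHAR('k) = 2" using K by (simp add: splitting_field_F2_def)
  have P0: "P \<noteq> 0" using irr by auto
  define d where "d = degree P"
  have d0: "d > 0"
  proof (rule ccontr)
    assume "\<not> d > 0"
    then have "is_unit P" using is_unit_iff_degree[OF P0] by (simp add: d_def)
    then show False using irr by auto
  qed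
  define S where "S = (\<lambda>r. ev x r) ` {r. degree r < d}"
  have evmod: "ev x r = ev x (r mod P)" for r
  proof -
    have "ev x r = ev x (r div P * P + r mod P)" by simp
    also have "\<dots> = ev x (r mod P)" using root by (simp only: ev_add[OF ch] ev_mult[OF ch]) simp
    finally show ?thesis .
  qed
  have inS: "ev x r \<in> S" for r
  proof -
    have "degree (r mod P) < d"
      using degree_mod_less[OF P0, of r] d0 by (auto simp: d_def)
    then show ?thesis unfolding S_def using evmod[of r] by blast
  qed
  have inj: "inj_on (\<lambda>r. ev x r) {r. degree r < d}"
  proof (rule inj_onI)
    fix r r' assume r: "r \<in> {r. degree r < d}" and r': "r' \<in> {r. degree r < d}"
      and e: "ev x r = ev x r'"
    have "ev x (r - r') = 0" using e by (simp add: ev_diff[OF ch])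
    then have dv: "P dvd (r - r')" using minpoly[OF ch irr root] by simp
    show "r = r'"
    proof (rule ccontr)
      assume "r \<noteq> r'"
      then have "r - r' \<noteq> 0" by simp
      then have "degree P \<le> degree (r - r')" using dv by (rule dvd_imp_degree_le[rotated])
      moreover have "degree (r - r') < d"
        using r r' degree_diff_le_max[of r r'] by auto
      ultimately show False by (simp add: d_def)
    qed
  qed
  have fS: "finite S" unfolding S_def using card_polys_deg[OF d0] by (intro finite_imageI) simp
  have cS: "card S = 2^d" unfolding S_def using card_polys_deg[OF d0] card_image[OF inj] by simp
  have mulS: "a * b \<in> S" if aS: "a \<in> S" and bS: "b \<in> S" for a b
  proof -
    obtain r where r: "a = ev x r" using aS unfolding S_def by blast
    obtain r' where r': "b = ev x r'" using bS unfolding S_def by blast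
    from r r' have "a * b = ev x (r * r')" by (simp add: ev_mult[OF ch])
    then show ?thesis using inS by simp
  qed
  have xS: "x \<in> S" using inS[of "[:0,1:]"] by simp
  have zS: "0 \<in> S" using inS[of 0] by simp
  have c0: "card (S - {0}) = 2^d - 1" using zS fS cS by simp
  have fx: "x ^ (2^d) = x"
  proof (cases "x = 0")
    case True then show ?thesis by simp
  next
    case False
    then have "x ^ (2^d - 1) = 1" using fermat_subset[OF fS mulS xS] c0 by simp
    moreover have "(2::nat)^d = Suc (2^d - 1)" by simp
    ultimately show ?thesis by (metis mult_1_right power_Suc)
  qed
  have "ev x (monom 1 (2^d) - [:0,1:]) = 0" using fx by (simp add: ev_X_pow_minus[OF ch])
  then have "P dvd (monom 1 (2^d) - [:0,1:])" using minpoly[OF ch irr root] by simp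
  then obtain h where h: "monom 1 (2^d) - [:0,1:] = P * h" unfolding dvd_def by blast
  have roots: "{r. ev r P = 0} \<subseteq> {y::'k. y ^ (2^d) = y}"
  proof
    fix r :: 'k assume "r \<in> {r. ev r P = 0}"
    then have "ev r (monom 1 (2^d) - [:0,1:]) = 0" using h by (simp add: ev_mult[OF ch])
    then show "r \<in> {y. y ^ (2^d) = y}" by (simp add: ev_X_pow_minus[OF ch])
  qed
  have spl: "\<And>S. is_subfield S \<Longrightarrow> {r::'k. ev r P = 0} \<subseteq> S \<Longrightarrow> S = UNIV"
    using K unfolding splitting_field_F2_def by meson
  have U: "{y::'k. y ^ (2^d) = y} = UNIV"
    by (rule spl[OF frob_subfield[OF ch] roots])
  have fU: "finite (UNIV::'k set)" and cU: "card (UNIV::'k set) \<le> 2^d"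
    using frob_finite[OF d0, where 'k='k] U by auto
  have "card S \<le> card (UNIV::'k set)" using fU by (simp add: card_mono)
  then show ?thesis using fU cU cS by (simp add: d_def)
qed

lemma ord_exists:
  fixes x :: "'k::field"
  assumes "x ^ N = 1" "N > 0"
  shows "\<exists>d>0. \<forall>e. x ^ e = 1 \<longleftrightarrow> d dvd e"
proof -
  define d where "d = (LEAST d. d > 0 \<and> x ^ d = 1)"
  have d: "d > 0 \<and> x ^ d = 1" using LeastI[of "\<lambda>d. d > 0 \<and> x ^ d = 1" N] assms
    by (simp add: d_def)
  have mn: "d \<le> e" if "0 < e" "x ^ e = 1" for e
    using Least_le[of "\<lambda>d. d > 0 \<and> x ^ d = 1" e] that by (simp add: d_def)
  have pe: "x ^ e = x ^ (e mod d)" for e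
  proof -
    have "x ^ e = x ^ (d * (e div d) + e mod d)" by simp
    also have "\<dots> = x ^ (e mod d)" by (simp only: power_add power_mult) (simp add: d)
    finally show ?thesis .
  qed
  show ?thesis
  proof (intro exI[of _ d] conjI allI iffI)
    show "d > 0" using d by simp
  next
    fix e assume "x ^ e = 1"
    then have e1: "x ^ (e mod d) = 1" using pe by simp
    show "d dvd e"
    proof (rule ccontr)
      assume "\<not> d dvd e"
      have "e mod d \<noteq> 0"
      proof
        assume "e mod d = 0"
        then have "d dvd e" by (simp add: dvd_eq_mod_eq_0)
        then show False using \<open>\<not> d dvd e\<close> by simp
      qed
      then have "e mod d > 0" by simp
      then have "d \<le> e mod d" using mn e1 by simp
      moreover have "e mod d < d" using d by simp
      ultimately show False by simp
    qed
  next
    fix e assume "d dvd e"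
    then obtain c where "e = d * c" by blast
    then show "x ^ e = 1" by (simp add: power_mult d)
  qed
qed

lemma gen_facts:
  fixes x :: "'k::field"
  assumes fin: "finite (UNIV::'k set)" and x0: "x \<noteq> 0"
  shows "(\<forall>y. y \<noteq> 0 \<longrightarrow> (\<exists>k. y = x ^ k)) \<longleftrightarrow>
           (\<forall>p. prime p \<and> p dvd card (UNIV - {0::'k}) \<longrightarrow> x ^ (card (UNIV - {0::'k}) div p) \<noteq> 1)"
    and "(\<forall>y. y \<noteq> 0 \<longrightarrow> (\<exists>k. y = x ^ k)) \<Longrightarrow> (\<forall>e. x ^ e = 1 \<longleftrightarrow> card (UNIV - {0::'k}) dvd e)"
proof -
  define Kx where "Kx = card (UNIV - {0::'k})"
  have fA: "finite (UNIV - {0::'k})" using fin by simp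
  have xK: "x ^ Kx = 1"
    unfolding Kx_def by (rule fermat_subset[OF fin]) (auto simp: x0)
  have ne: "UNIV - {0::'k} \<noteq> {}" using one_neq_zero by blast
  have K0: "Kx > 0" unfolding Kx_def using card_gt_0_iff[of "UNIV - {0::'k}"] fA ne by blast
  obtain d where d0: "d > 0" and dd: "\<And>e. x ^ e = 1 \<longleftrightarrow> d dvd e"
    using ord_exists[OF xK K0] by blast
  have dK: "d dvd Kx" using dd xK by simp
  have xd: "x ^ d = 1" using dd by simp
  have pe: "x ^ e = x ^ (e mod d)" for e
  proof -
    have "x ^ e = x ^ (d * (e div d) + e mod d)" by simp
    also have "\<dots> = x ^ (e mod d)" by (simp only: power_add power_mult) (simp add: xd)
    finally show ?thesis .
  qed
  have A: "(\<forall>y. y \<noteq> 0 \<longrightarrow> (\<exists>k. y = x ^ k)) \<longleftrightarrow> d = Kx"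
  proof
    assume g: "\<forall>y. y \<noteq> 0 \<longrightarrow> (\<exists>k. y = x ^ k)"
    have "UNIV - {0} \<subseteq> (\<lambda>j. x ^ j) ` {..<d}"
    proof
      fix y :: 'k assume "y \<in> UNIV - {0}"
      then obtain k where "y = x ^ k" using g by auto
      then have "y = x ^ (k mod d)" using pe by simp
      then show "y \<in> (\<lambda>j. x ^ j) ` {..<d}" using d0 by auto
    qed
    then have "Kx \<le> card ((\<lambda>j. x ^ j) ` {..<d})" unfolding Kx_def by (intro card_mono) auto
    also have "\<dots> \<le> d" using card_image_le[of "{..<d}" "\<lambda>j. x ^ j"] by simp
    finally show "d = Kx" using dvd_imp_le[OF dK K0] by simp
  next
    assume dk: "d = Kx"
    have inj: "inj_on (\<lambda>j. x ^ j) {..<Kx}"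
    proof -
      have *: "False" if "i < j" "j < Kx" "x ^ i = x ^ j" for i j
      proof -
        have e1: "i + (j - i) = j" using that(1) by simp
        have "x ^ i * x ^ (j - i) = x ^ j" unfolding power_add[symmetric] e1 ..
        then have "x ^ i * x ^ (j - i) = x ^ i" using that(3) by simp
        then have "x ^ (j - i) = 1" using x0 by simp
        then have "Kx dvd (j - i)" using dd dk by simp
        then show False using that by (simp add: nat_dvd_not_less)
      qed
      show ?thesis by (rule inj_onI) (metis "*" lessThan_iff linorder_cases)
    qed
    have sub: "(\<lambda>j. x ^ j) ` {..<Kx} \<subseteq> UNIV - {0}" using x0 by auto
    have ci: "card ((\<lambda>j. x ^ j) ` {..<Kx}) = Kx" using card_image[OF inj] by simp
    have "(\<lambda>j. x ^ j) ` {..<Kx} = UNIV - {0}"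
      by (rule card_subset_eq[OF fA sub]) (simp only: ci, simp add: Kx_def)
    then show "\<forall>y. y \<noteq> 0 \<longrightarrow> (\<exists>k. y = x ^ k)" by (metis (no_types, lifting) DiffI UNIV_I imageE singletonD)
  qed
  have B: "d = Kx \<longleftrightarrow> (\<forall>p. prime p \<and> p dvd Kx \<longrightarrow> x ^ (Kx div p) \<noteq> 1)"
  proof
    assume dk: "d = Kx"
    show "\<forall>p. prime p \<and> p dvd Kx \<longrightarrow> x ^ (Kx div p) \<noteq> 1"
    proof (intro allI impI)
      fix p :: nat assume p: "prime p \<and> p dvd Kx"
      then have p1: "p > 1" using prime_gt_1_nat by blast
      have q0: "Kx div p > 0" using p K0 by (metis dvd_div_eq_0_iff gr0I less_not_refl2)
      have q1: "Kx div p < Kx" using p1 K0 by simp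
      show "x ^ (Kx div p) \<noteq> 1"
      proof
        assume "x ^ (Kx div p) = 1"
        then have "Kx dvd Kx div p" using dd dk by simp
        then show False using q0 q1 by (simp add: nat_dvd_not_less)
      qed
    qed
  next
    assume r: "\<forall>p. prime p \<and> p dvd Kx \<longrightarrow> x ^ (Kx div p) \<noteq> 1"
    show "d = Kx"
    proof (rule ccontr)
      assume ne: "d \<noteq> Kx"
      obtain c where c: "Kx = d * c" using dK by blast
      have "c \<noteq> 1" using ne c by simp
      then obtain p where p: "prime p" "p dvd c" using prime_factor_nat by blast
      obtain t where t: "c = p * t" using p by blast
      have pK: "p dvd Kx" using c t by simp
      have "Kx div p = d * t" using c t p by (simp add: prime_gt_0_nat)
      then have "x ^ (Kx div p) = 1" using dd by simp
      then show False using r p pK by blast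
    qed
  qed
  show "(\<forall>y. y \<noteq> 0 \<longrightarrow> (\<exists>k. y = x ^ k)) \<longleftrightarrow>
           (\<forall>p. prime p \<and> p dvd card (UNIV - {0::'k}) \<longrightarrow> x ^ (card (UNIV - {0::'k}) div p) \<noteq> 1)"
    using A B by (simp add: Kx_def)
  show "(\<forall>y. y \<noteq> 0 \<longrightarrow> (\<exists>k. y = x ^ k)) \<Longrightarrow> (\<forall>e. x ^ e = 1 \<longleftrightarrow> card (UNIV - {0::'k}) dvd e)"
    using A dd by (simp add: Kx_def)
qed



lemma frob_bound:
  assumes irr: "irreducible P" and K: "splitting_field_F2 P TYPE('k::field)"
    and root: "ev (x::'k) P = 0" and fx: "x ^ (2^t) = x" and t0: "t > 0"
  shows "card (UNIV::'k set) \<le> 2^t"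
proof -
  have ch: "CHAR('k) = 2" using K by (simp add: splitting_field_F2_def)
  have "ev x (monom 1 (2^t) - [:0,1:]) = 0" using fx by (simp add: ev_X_pow_minus[OF ch])
  then have "P dvd (monom 1 (2^t) - [:0,1:])" using minpoly[OF ch irr root] by simp
  then obtain h where h: "monom 1 (2^t) - [:0,1:] = P * h" unfolding dvd_def by blast
  have roots: "{r. ev r P = 0} \<subseteq> {y::'k. y ^ (2^t) = y}"
  proof
    fix r :: 'k assume "r \<in> {r. ev r P = 0}"
    then have "ev r (monom 1 (2^t) - [:0,1:]) = 0" using h by (simp add: ev_mult[OF ch])
    then show "r \<in> {y. y ^ (2^t) = y}" by (simp add: ev_X_pow_minus[OF ch])
  qed
  have spl: "\<And>S. is_subfield S \<Longrightarrow> {r::'k. ev r P = 0} \<subseteq> S \<Longrightarrow> S = UNIV"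
    using K unfolding splitting_field_F2_def by meson
  have U: "{y::'k. y ^ (2^t) = y} = UNIV"
    by (rule spl[OF frob_subfield[OF ch] roots])
  show ?thesis using frob_finite[OF t0, where 'k='k] U by simp
qed

lemma prim_iff:
  assumes irr: "irreducible Q" and K: "splitting_field_F2 Q TYPE('k::field)"
    and root: "ev (\<mu>::'k) Q = 0"
  shows "primitive_F2 Q TYPE('k) \<longleftrightarrow>
    (\<forall>p. prime p \<and> p dvd card (UNIV - {0::'k}) \<longrightarrow> \<mu> ^ (card (UNIV - {0::'k}) div p) \<noteq> 1)"
proof -
  have ch: "CHAR('k) = 2" using K by (simp add: splitting_field_F2_def)
  have fin: "finite (UNIV::'k set)" and cU: "card (UNIV::'k set) = 2 ^ degree Q"
    using card_split[OF irr K root] by auto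
  have mp: "ev \<nu> g = 0 \<longleftrightarrow> Q dvd g" if "ev \<nu> Q = 0" for \<nu> :: 'k and g
    using minpoly[OF ch irr that] .
  have Q0: "Q \<noteq> 0" using irr by auto
  show ?thesis
  proof (cases "\<mu> = 0")
    case True
    have QX: "Q dvd [:0,1:]" using mp[OF root, of "[:0,1:]"] True by simp
    have r0: "\<nu> = 0" if "ev \<nu> Q = 0" for \<nu> :: 'k
      using mp[OF that, of "[:0,1:]"] QX by simp
    have "degree Q \<le> 1" using dvd_imp_degree_le[OF QX] by simp
    moreover have "degree Q \<noteq> 0"
    proof
      assume "degree Q = 0"
      then have "is_unit Q" using is_unit_iff_degree[OF Q0] by simp
      then show False using irr by auto
    qed
    ultimately have "degree Q = 1" by simp
    then have c2: "card (UNIV::'k set) = 2" using cU by simp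
    have c1: "card (UNIV - {0::'k}) = 1" using c2 fin by (simp add: card_Diff_singleton)
    have y1: "y = 1" if "y \<noteq> (0::'k)" for y
    proof (rule ccontr)
      assume "y \<noteq> 1"
      then have "card {1, y} = 2" by simp
      moreover have "{1, y} \<subseteq> UNIV - {0::'k}" using that by auto
      ultimately have "2 \<le> card (UNIV - {0::'k})" using fin by (metis card_mono finite_Diff)
      then show False using c1 by simp
    qed
    have L: "primitive_F2 Q TYPE('k)"
      unfolding primitive_F2_def
    proof (intro conjI allI impI)
      show "irreducible Q" by (rule irr)
      fix \<nu> y :: 'k assume "ev \<nu> Q = 0" "y \<noteq> 0"
      then show "\<exists>k. y = \<nu> ^ k" using y1 by (intro exI[of _ 0]) simp
    qed
    have R: "\<forall>p. prime p \<and> p dvd card (UNIV - {0::'k}) \<longrightarrow> \<mu> ^ (card (UNIV - {0::'k}) div p) \<noteq> 1"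
      using c1 by auto
    show ?thesis using L R by simp
  next
    case False
    have nz: "\<nu> \<noteq> 0" if "ev \<nu> Q = 0" for \<nu> :: 'k
    proof
      assume "\<nu> = 0"
      then have "Q dvd [:0,1:]" using mp[OF that, of "[:0,1:]"] by simp
      then have "\<mu> = 0" using mp[OF root, of "[:0,1:]"] by simp
      with False show False by simp
    qed
    have pw: "\<nu> ^ e = 1 \<longleftrightarrow> \<mu> ^ e = 1" if "ev \<nu> Q = 0" for \<nu> :: 'k and e
      using mp[OF that, of "monom 1 e - 1"] mp[OF root, of "monom 1 e - 1"]
      by (simp add: ev_X_pow_minus(2)[OF ch])
    have gn: "(\<forall>y. y \<noteq> 0 \<longrightarrow> (\<exists>k. y = \<nu> ^ k)) \<longleftrightarrow>
       (\<forall>p. prime p \<and> p dvd card (UNIV - {0::'k}) \<longrightarrow> \<nu> ^ (card (UNIV - {0::'k}) div p) \<noteq> 1)"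
      if "ev \<nu> Q = 0" for \<nu> :: 'k
      by (rule gen_facts(1)[OF fin nz[OF that]])
    show ?thesis
    proof
      assume "primitive_F2 Q TYPE('k)"
      then have "\<forall>y. y \<noteq> 0 \<longrightarrow> (\<exists>k. y = \<mu> ^ k)" using root unfolding primitive_F2_def by blast
      then show "\<forall>p. prime p \<and> p dvd card (UNIV - {0::'k}) \<longrightarrow> \<mu> ^ (card (UNIV - {0::'k}) div p) \<noteq> 1"
        using gn[OF root] by blast
    next
      assume r: "\<forall>p. prime p \<and> p dvd card (UNIV - {0::'k}) \<longrightarrow> \<mu> ^ (card (UNIV - {0::'k}) div p) \<noteq> 1"
      show "primitive_F2 Q TYPE('k)"
        unfolding primitive_F2_def
      proof (intro conjI allI impI)
        show "irreducible Q" by (rule irr)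
        fix \<nu> y :: 'k assume h\<nu>: "ev \<nu> Q = 0" and y: "y \<noteq> 0"
        have "\<forall>p. prime p \<and> p dvd card (UNIV - {0::'k}) \<longrightarrow> \<nu> ^ (card (UNIV - {0::'k}) div p) \<noteq> 1"
          using r pw[OF h\<nu>] by simp
        then show "\<exists>k. y = \<nu> ^ k" using gn[OF h\<nu>] y by blast
      qed
    qed
  qed
qed

lemma prod_roots_dvd:
  fixes g :: "'k::field poly"
  assumes "finite A" "\<And>a. a \<in> A \<Longrightarrow> poly g a = 0"
  shows "(\<Prod>a\<in>A. [:-a, 1:]) dvd g"
  using assms
proof (induction A rule: finite_induct)
  case empty then show ?case by simp
next
  case (insert a A)
  have "(\<Prod>a\<in>A. [:-a, 1:]) dvd g" using insert by simp
  then obtain h where h: "g = (\<Prod>a\<in>A. [:-a, 1:]) * h" unfolding dvd_def by blast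
  have "poly (\<Prod>a\<in>A. [:-a, 1:]) a \<noteq> 0"
    using insert(1,2) by (auto simp: poly_prod prod_zero_iff)
  moreover have "poly g a = 0" using insert by simp
  ultimately have "poly h a = 0" using h by simp
  then have "[:-a, 1:] dvd h" by (simp add: poly_eq_0_iff_dvd)
  then obtain h' where hh': "h = [:-a, 1:] * h'" unfolding dvd_def by blast
  have eqP: "(\<Prod>a\<in>insert a A. [:-a, 1:]) = [:-a, 1:] * (\<Prod>a\<in>A. [:-a, 1:])"
    using insert(1,2) by (rule prod.insert)
  have "g = (\<Prod>a\<in>insert a A. [:-a, 1:]) * h'" by (simp only: h hh' eqP ac_simps)
  then show ?case by simp
qed

lemma monic_roots_eq:
  fixes g :: "'k::field poly"
  assumes dg: "degree g = n" and cg: "coeff g n = 1" and inj: "inj_on r {..<n}"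
    and rt: "\<And>j. j < n \<Longrightarrow> poly g (r j) = 0"
  shows "poly g 0 = (\<Prod>j<n. - r j)"
proof -
  let ?P = "\<Prod>j<n. [:- r j, 1:]"
  have g0: "g \<noteq> 0" using cg by auto
  have "(\<Prod>a\<in>r ` {..<n}. [:-a, 1:]) dvd g"
    by (rule prod_roots_dvd) (use rt in auto)
  then have "?P dvd g" by (simp add: prod.reindex[OF inj])
  then obtain h where h: "g = ?P * h" unfolding dvd_def by blast
  have PP: "degree ?P = n \<and> coeff ?P n = 1"
    using degree_prod_monic[of n "\<lambda>j. [:- r j, 1:]"] by (simp add: atLeast0LessThan)
  have P0: "?P \<noteq> 0" using PP by auto
  have h0: "h \<noteq> 0" using h g0 by auto
  have "degree g = degree ?P + degree h" using h P0 h0 by (simp add: degree_mult_eq)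
  then have dh: "degree h = 0" using PP dg by simp
  have "lead_coeff g = lead_coeff ?P * lead_coeff h" using h by (simp add: lead_coeff_mult)
  then have "lead_coeff h = 1" using PP dg cg by simp
  then have "coeff h 0 = 1" using dh by simp
  then have ph: "poly h 0 = 1" by (simp add: poly_0_coeff_0)
  have "poly g 0 = poly ?P 0" using h ph by simp
  also have "\<dots> = (\<Prod>j<n. - r j)" by (simp add: poly_prod)
  finally show ?thesis .
qed

lemma geom_nat:
  assumes "q \<ge> (1::nat)"
  shows "(q - 1) * (\<Sum>j<n. q ^ j) = q ^ n - 1"
proof (induction n)
  case 0 then show ?case by simp
next
  case (Suc n)
  have A: "q ^ n \<ge> 1" using assms by simp
  have "(q - 1) * (\<Sum>j<Suc n. q ^ j) = (q ^ n - 1) + (q - 1) * q ^ n"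
    using Suc by (simp add: algebra_simps)
  also have "\<dots> = q * q ^ n - 1"
  proof -
    obtain r where r: "q = Suc r" using assms by (cases q) auto
    have "(q - 1) * q ^ n = r * q ^ n" using r by simp
    moreover have "q * q ^ n = q ^ n + r * q ^ n" using r by simp
    ultimately show ?thesis using A by linarith
  qed
  finally show ?case by simp
qed



lemma degQ:
  fixes fT fS :: "bit poly"
  assumes dS: "degree fS \<le> n - 1" and n: "n > 0" and m: "m > 0" and cT: "coeff fT m = 1"
  shows "degree (\<Sum>i\<le>m. Polynomial.smult (coeff fT i) (monom 1 (n * i) * fS ^ (m - i))) = n * m"
proof -
  define t where "t i = Polynomial.smult (coeff fT i) (monom 1 (n * i) * fS ^ (m - i))" for i
  have sp: "(\<Sum>i\<le>m. t i) = (\<Sum>i<m. t i) + t m"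
    by (simp add: lessThan_Suc_atMost[symmetric])
  have tm: "t m = monom 1 (n * m)" using cT by (simp add: t_def)
  have dt: "degree (t i) \<le> n * m - 1" if i: "i < m" for i
  proof -
    have "degree (t i) \<le> degree (monom (1::bit) (n * i) * fS ^ (m - i))"
      unfolding t_def by (rule degree_smult_le)
    also have "\<dots> \<le> degree (monom (1::bit) (n * i)) + degree (fS ^ (m - i))"
      by (rule degree_mult_le)
    also have "\<dots> \<le> n * i + (m - i) * (n - 1)"
    proof -
      have "degree (fS ^ (m - i)) \<le> degree fS * (m - i)" by (rule degree_power_le)
      also have "\<dots> \<le> (n - 1) * (m - i)" using dS by (rule mult_le_mono1)
      finally have dp: "degree (fS ^ (m - i)) \<le> (m - i) * (n - 1)" by (simp add: mult.commute)
      show ?thesis using dp by (intro add_mono) (auto simp: degree_monom_eq)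
    qed
    also have "\<dots> \<le> n * m - 1"
    proof -
      define k where "k = m - i"
      have k1: "k \<ge> 1" using i by (simp add: k_def)
      have mk: "m = i + k" using i by (simp add: k_def)
      have "k * (n - 1) + k = k * n" using n by (cases n) (auto simp: algebra_simps)
      then have "k * (n - 1) + 1 \<le> k * n" using k1 by linarith
      then have "n * i + k * (n - 1) + 1 \<le> n * i + k * n" by linarith
      also have "\<dots> = n * m" using mk by (simp add: algebra_simps)
      finally show ?thesis by (simp add: k_def)
    qed
    finally show ?thesis .
  qed
  have "degree (\<Sum>i<m. t i) \<le> n * m - 1"
    by (rule degree_sum_le) (use dt in auto)
  moreover have nm: "1 \<le> n * m" using n m by (metis One_nat_def Suc_leI nat_0_less_mult_iff)
  ultimately have "degree (\<Sum>i<m. t i) < n * m" by linarith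
  then have "degree (\<Sum>i<m. t i) < degree (monom (1::bit) (n * m))"
    by (simp add: degree_monom_eq)
  then have "degree ((\<Sum>i<m. t i) + t m) = n * m"
    unfolding tm by (simp add: degree_add_eq_right degree_monom_eq)
  then show ?thesis using sp by (simp add: t_def)
qed

theorem mainTheorem9:
  fixes T :: "bit mat" and m n :: nat and a :: "nat \<Rightarrow> bit"
    and \<mu> :: "'k::field" and Q :: "bit poly"
  assumes T: "T \<in> carrier_mat m m"
    and L: "splitting_field_F2 (char_poly T) TYPE('l::field)"
    and prim: "primitive_F2 (char_poly T) TYPE('l)"
    and n: "0 < n" and a0: "a 0 \<noteq> 0"
    and Q_def: "Q = (\<Sum>i\<le>m. Polynomial.smult (coeff (char_poly T) i)
                       (monom 1 (n * i) * (\<Sum>j<n. monom (a j) j) ^ (m - i)))"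
    and irr: "irreducible Q"
    and K: "splitting_field_F2 Q TYPE('k)"
    and root: "poly (map_poly F2_emb Q) \<mu> = 0"
  shows "(\<forall>p::nat. prime p \<and> p dvd card (UNIV - {0::'l}) \<longrightarrow>
            \<mu> ^ (card (UNIV - {0::'k}) div p) \<noteq> 1)
       \<and> (primitive_F2 Q TYPE('k) \<longleftrightarrow>
            (\<forall>p::nat. prime p \<and> p dvd card (UNIV - {0::'k}) \<and> \<not> p dvd card (UNIV - {0::'l}) \<longrightarrow>
               \<mu> ^ (card (UNIV - {0::'k}) div p) \<noteq> 1))"
proof -
  define fT where "fT = char_poly T"
  define fS where "fS = (\<Sum>j<n. monom (a j) j)"
  have Qe: "Q = (\<Sum>i\<le>m. Polynomial.smult (coeff fT i) (monom 1 (n * i) * fS ^ (m - i)))"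
    using Q_def by (simp add: fT_def fS_def)
  have dT: "degree fT = m" and cT: "coeff fT m = 1"
    using degree_monic_char_poly[OF T] by (auto simp: fT_def)
  have irrT: "irreducible fT" using prim by (simp add: primitive_F2_def fT_def)
  have fT0: "fT \<noteq> 0" using irrT by auto
  have m0: "m > 0"
  proof (rule ccontr)
    assume "\<not> m > 0"
    then have "degree fT = 0" using dT by simp
    then have "is_unit fT" using is_unit_iff_degree[OF fT0] by simp
    then show False using irrT by auto
  qed
  have L': "splitting_field_F2 fT TYPE('l)" using L by (simp add: fT_def)
  have chL: "CHAR('l) = 2" using L by (simp add: splitting_field_F2_def)
  have chK: "CHAR('k) = 2" using K by (simp add: splitting_field_F2_def)
  obtain rs :: "'l list" where rs: "map_poly F2_emb fT = Polynomial.smult (F2_emb (lead_coeff fT)) (\<Prod>r\<leftarrow>rs. [:- r, 1:])"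
    using L unfolding splitting_field_F2_def fT_def by blast
  obtain \<beta> rs' where brs: "rs = \<beta> # rs'"
  proof (cases rs)
    case Nil
    then have "degree (map_poly F2_emb fT :: 'l poly) = 0" using rs by simp
    then have False using m0 dT degree_map_F2[of fT, where 'k='l] by linarith
    then show ?thesis by simp
  next
    case (Cons b l) then show ?thesis using that by blast
  qed
  have \<beta>root: "ev \<beta> fT = 0" using rs brs by simp
  have cardL: "finite (UNIV::'l set)" "card (UNIV::'l set) = 2 ^ m"
    using card_split[OF irrT L' \<beta>root] dT by auto
  have dS: "degree fS \<le> n - 1" unfolding fS_def
    by (rule degree_sum_le) (auto intro: order.trans[OF degree_monom_le])
  have dQ: "degree Q = n * m" unfolding Qe by (rule degQ[OF dS n m0 cT])
  have cardK: "finite (UNIV::'k set)" "card (UNIV::'k set) = 2 ^ (n * m)"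
    using card_split[OF irr K root] dQ by auto
  define Lx where "Lx = card (UNIV - {0::'l})"
  define Kx where "Kx = card (UNIV - {0::'k})"
  have Lxe: "Lx = 2 ^ m - 1" unfolding Lx_def using cardL by (simp add: card_Diff_singleton)
  have Kxe: "Kx = 2 ^ (n * m) - 1" unfolding Kx_def using cardK by (simp add: card_Diff_singleton)
  have conj1: "\<forall>p::nat. prime p \<and> p dvd Lx \<longrightarrow> \<mu> ^ (Kx div p) \<noteq> 1"
  proof (intro allI impI)
    fix p :: nat assume p: "prime p \<and> p dvd Lx"
    have p1: "p > 1" using p prime_gt_1_nat by blast
    have Lx1: "Lx \<noteq> 1" using p p1 by auto
    have ev0: "ev (0::'l) fT = F2_emb (coeff fT 0)"
      by (simp add: poly_0_coeff_0 coeff_map_poly)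
    have c0: "coeff fT 0 \<noteq> 0"
    proof
      assume c00: "coeff fT 0 = 0"
      have "ev (0::'l) fT = 0" using c00 ev0 by simp
      then have "fT dvd [:0,1:]" using minpoly[OF chL irrT, of 0 "[:0,1:]"] by simp
      then have "degree fT \<le> degree [:0::bit, 1:]" by (rule dvd_imp_degree_le) simp
      then have "degree fT \<le> 1" by simp
      then have "m = 1" using m0 dT by simp
      then show False using Lx1 Lxe by simp
    qed
    then have c01: "coeff fT 0 = 1" by simp
    have \<beta>0: "\<beta> \<noteq> 0" using \<beta>root ev0 c01 by auto
    have pr2: "\<forall>x::'l. ev x fT = 0 \<longrightarrow> (\<forall>y. y \<noteq> 0 \<longrightarrow> (\<exists>k. y = x ^ k))"
      using prim unfolding primitive_F2_def fT_def by (elim conjE) assumption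
    have gen\<beta>: "\<forall>y. y \<noteq> 0 \<longrightarrow> (\<exists>k. y = \<beta> ^ k)"
      using pr2 \<beta>root by blast
    have ord\<beta>: "\<forall>e. \<beta> ^ e = 1 \<longleftrightarrow> Lx dvd e"
      unfolding Lx_def by (rule gen_facts(2)[OF cardL(1) \<beta>0 gen\<beta>])
    have a01: "a 0 = 1" using a0 by simp
    have evfS: "ev y fS = (\<Sum>j<n. F2_emb (a j) * y ^ j)" for y :: 'k
      by (simp add: fS_def ev_sum[OF chK] ev_monom[OF chK])
    have fS0: "ev (0::'k) fS = 1"
    proof -
      obtain n' where n': "n = Suc n'" using n by (cases n) auto
      show ?thesis unfolding evfS n' sum.lessThan_Suc_shift using a01 by simp
    qed
    have evQ: "ev y Q = (\<Sum>i\<le>m. F2_emb (coeff fT i) * y ^ (n * i) * (ev y fS) ^ (m - i))" for y :: 'k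
      unfolding Qe
      by (simp add: ev_sum[OF chK] ev_smult[OF chK] ev_mult[OF chK] ev_monom[OF chK] ev_power[OF chK] mult.assoc)
    have \<mu>0: "\<mu> \<noteq> 0"
    proof
      assume "\<mu> = 0"
      have "ev (0::'k) Q = (\<Sum>i\<le>m. if i = 0 then F2_emb (coeff fT 0) * (ev 0 fS) ^ m else 0)"
        unfolding evQ by (intro sum.cong refl) (use n in auto)
      also have "\<dots> = 1" using c01 fS0 by simp
      finally show False using root \<open>\<mu> = 0\<close> by simp
    qed
    define s where "s = ev \<mu> fS"
    have s0: "s \<noteq> 0"
    proof
      assume s00: "s = 0"
      have "ev \<mu> Q = (\<Sum>i\<le>m. if i = m then \<mu> ^ (n * m) else 0)"
        unfolding evQ s_def[symmetric] by (intro sum.cong refl) (use s00 cT in auto)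
      also have "\<dots> = \<mu> ^ (n * m)" by simp
      finally show False using root \<mu>0 by simp
    qed
    define \<gamma> where "\<gamma> = \<mu> ^ n / s"
    have evT: "ev y fT = (\<Sum>i\<le>m. F2_emb (coeff fT i) * y ^ i)" for y :: 'k
      by (simp add: poly_altdef coeff_map_poly degree_map_F2 dT)
    have "s ^ m * ev \<gamma> fT = (\<Sum>i\<le>m. F2_emb (coeff fT i) * \<mu> ^ (n * i) * s ^ (m - i))"
      unfolding evT sum_distrib_left
    proof (intro sum.cong refl)
      fix i assume "i \<in> {..m}"
      then have im: "s ^ m = s ^ i * s ^ (m - i)" by (simp flip: power_add)
      show "s ^ m * (F2_emb (coeff fT i) * \<gamma> ^ i) = F2_emb (coeff fT i) * \<mu> ^ (n * i) * s ^ (m - i)"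
        unfolding im \<gamma>_def using s0 by (simp add: power_divide power_mult)
    qed
    also have "\<dots> = 0" using root evQ s_def by simp
    finally have \<gamma>root: "ev \<gamma> fT = 0" using s0 by simp
    have \<gamma>0: "\<gamma> \<noteq> 0" using \<gamma>_def \<mu>0 s0 by simp
    have ord\<gamma>: "\<gamma> ^ e = 1 \<longleftrightarrow> Lx dvd e" for e
    proof -
      have "\<gamma> ^ e = 1 \<longleftrightarrow> fT dvd (monom 1 e - 1)"
        using minpoly[OF chK irrT \<gamma>root, of "monom 1 e - 1"] by (simp add: ev_X_pow_minus(2)[OF chK])
      also have "\<dots> \<longleftrightarrow> \<beta> ^ e = 1"
        using minpoly[OF chL irrT \<beta>root, of "monom 1 e - 1"] by (simp add: ev_X_pow_minus(2)[OF chL])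
      finally show ?thesis using ord\<beta> by simp
    qed
    define q where "q = (2::nat) ^ m"
    have q2: "q \<ge> 2"
    proof -
      obtain m' where "m = Suc m'" using m0 by (cases m) auto
      then show ?thesis unfolding q_def by simp
    qed
    have Lxq: "Lx = q - 1" using Lxe q_def by simp
    have Kxq: "Kx = q ^ n - 1" using Kxe q_def by (simp add: power_mult mult.commute)
    have \<gamma>q: "\<gamma> ^ q = \<gamma>"
    proof -
      have "\<gamma> ^ (q - 1) = 1" using ord\<gamma> Lxq by simp
      moreover have "q = Suc (q - 1)" using q2 by simp
      ultimately show ?thesis by (metis mult_1_right power_Suc)
    qed
    have \<gamma>qj: "\<gamma> ^ (q ^ j) = \<gamma>" for j
    proof (induction j)
      case 0 then show ?case by simp
    next
      case (Suc j)
      have "\<gamma> ^ (q ^ Suc j) = (\<gamma> ^ (q ^ j)) ^ q" by (simp only: power_Suc2 power_mult)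
      then show ?case using Suc \<gamma>q by simp
    qed
    have \<mu>K: "\<mu> ^ (q ^ n) = \<mu>"
    proof -
      have "\<mu> ^ Kx = 1" unfolding Kx_def by (rule fermat_subset[OF cardK(1)]) (auto simp: \<mu>0)
      moreover have "q ^ n = Suc Kx" using Kxq q2 by simp
      ultimately show ?thesis by (metis mult_1_right power_Suc)
    qed
    define g :: "'k poly" where "g = monom 1 n + Polynomial.smult \<gamma> (map_poly F2_emb fS)"
    have pg: "poly g z = z ^ n + \<gamma> * ev z fS" for z by (simp add: g_def poly_monom)
    have gs: "\<gamma> * s = \<mu> ^ n" using s0 by (simp add: \<gamma>_def)
    have groots: "poly g (\<mu> ^ (q ^ j)) = 0" for j
    proof -
      define t where "t = m * j"
      have qt: "q ^ j = 2 ^ t" by (simp add: q_def t_def power_mult)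
      have "poly g (\<mu> ^ (q ^ j)) = (\<mu> ^ (2^t)) ^ n + \<gamma> ^ (2^t) * s ^ (2^t)"
        unfolding pg qt s_def using \<gamma>qj[of j] qt by (simp add: ev_frob[OF chK])
      also have "\<dots> = (\<mu> ^ n) ^ (2^t) + (\<gamma> * s) ^ (2^t)"
        by (simp add: power_mult_distrib flip: power_mult) (simp add: mult.commute)
      also have "\<dots> = (\<mu> ^ n + \<gamma> * s) ^ (2^t)" by (simp add: frob_add[OF chK])
      also have "\<dots> = 0" by (simp add: gs char2_add_self[OF chK])
      finally show ?thesis .
    qed
    have inj: "inj_on (\<lambda>j. \<mu> ^ (q ^ j)) {..<n}"
    proof -
      have *: False if ij: "i < j" "j < n" and e: "\<mu> ^ (q ^ i) = \<mu> ^ (q ^ j)" for i j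
      proof -
        define t where "t = i + (n - j)"
        have t0: "0 < t" "t < n" using ij by (auto simp: t_def)
        have "(\<mu> ^ (q ^ i)) ^ (q ^ (n - j)) = \<mu> ^ (q ^ t)"
          by (simp add: t_def power_add flip: power_mult)
        moreover have "(\<mu> ^ (q ^ j)) ^ (q ^ (n - j)) = \<mu> ^ (q ^ n)"
        proof -
          have jn: "j + (n - j) = n" using ij by simp
          have "(\<mu> ^ (q ^ j)) ^ (q ^ (n - j)) = \<mu> ^ (q ^ j * q ^ (n - j))" by (rule power_mult[symmetric])
          also have "\<dots> = \<mu> ^ (q ^ (j + (n - j)))" by (simp only: power_add)
          also have "\<dots> = \<mu> ^ (q ^ n)" by (simp only: jn)
          finally show ?thesis .
        qed
        ultimately have "\<mu> ^ (q ^ t) = \<mu>" using e \<mu>K by simp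
        then have "\<mu> ^ (2 ^ (m * t)) = \<mu>" by (simp add: q_def power_mult)
        then have "card (UNIV::'k set) \<le> 2 ^ (m * t)"
          using frob_bound[OF irr K root] m0 t0 by simp
        moreover have "(2::nat) ^ (m * t) < 2 ^ (n * m)"
          by (rule power_strict_increasing) (use t0 m0 in auto)
        ultimately show False using cardK(2) by simp
      qed
      show ?thesis by (rule inj_onI) (metis "*" lessThan_iff linorder_cases)
    qed
    have dmS: "degree (map_poly F2_emb fS :: 'k poly) < n" using dS n by (simp add: degree_map_F2)
    have dsm: "degree (Polynomial.smult \<gamma> (map_poly F2_emb fS)) < n"
      using degree_smult_le[of \<gamma> "map_poly F2_emb fS"] dmS by linarith
    have dg: "degree g = n" unfolding g_def
      using dsm by (simp add: degree_add_eq_left degree_monom_eq)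
    have cg: "coeff g n = 1" unfolding g_def
      using dmS by (simp add: coeff_eq_0)
    have "poly g 0 = (\<Prod>j<n. - (\<mu> ^ (q ^ j)))"
      by (rule monic_roots_eq[OF dg cg inj]) (rule groots)
    also have "\<dots> = (\<Prod>j<n. \<mu> ^ (q ^ j))" by (simp add: char2_minus[OF chK])
    also have "\<dots> = \<mu> ^ (\<Sum>j<n. q ^ j)" by (simp add: power_sum)
    finally have \<gamma>S: "\<gamma> = \<mu> ^ (\<Sum>j<n. q ^ j)" using pg[of 0] fS0 by (simp add: zero_power[OF n])
    define S where "S = (\<Sum>j<n. q ^ j)"
    have KLS: "Kx = Lx * S" using geom_nat[of q n] q2 Lxq Kxq by (simp add: S_def)
    obtain u where u: "Lx = p * u" using p by blast
    have Kdiv: "Kx div p = S * u" using KLS u p1 by simp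
    have "\<mu> ^ (Kx div p) = \<gamma> ^ u" using Kdiv \<gamma>S by (simp add: S_def power_mult)
    moreover have "\<not> Lx dvd u"
    proof
      assume "Lx dvd u"
      moreover have "Lx \<noteq> 0" using Lxq q2 by simp
      moreover have "u > 0" by (rule gr0I) (use u \<open>Lx \<noteq> 0\<close> in simp)
      moreover have "u < Lx" using u p1 \<open>u > 0\<close> by simp
      ultimately show False by (simp add: nat_dvd_not_less)
    qed
    ultimately show "\<mu> ^ (Kx div p) \<noteq> 1" using ord\<gamma> by simp
  qed
  have pr: "primitive_F2 Q TYPE('k) \<longleftrightarrow>
    (\<forall>p. prime p \<and> p dvd Kx \<longrightarrow> \<mu> ^ (Kx div p) \<noteq> 1)"
    unfolding Kx_def by (rule prim_iff[OF irr K root])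
  show ?thesis
    using conj1 pr unfolding Kx_def[symmetric] Lx_def[symmetric] by blast
qed

end
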